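(* Let $w=a_1\cdots a_n$ be a word over $\{a,b\}$ with $a_1=a_n$. If deleting some $k$ letters from $w$ yields a palindrome, then one can obtain a palindrome by deleting some $l\le k$ letters from $w$ in such a way that the letters $a_1$ and $a_n$ are not deleted.
   Context: A word is a finite word over the two-letter alphabet $\{a,b\}$. A word $w=a_1\cdots a_n$ is a palindrome if $a_i=a_{n-i+1}$ for all $i\le n$. *)

theory Defs
  imports Main
begin

datatype letter = a | b

type_synonym word = "letter list"

definition palindrome :: "word \<Rightarrow> bool" where
  "palindrome w \<longleftrightarrow> (\<forall>i < length w. w ! i = w ! (length w - 1 - i))"

definition delete_positions :: "word \<Rightarrow> nat set \<Rightarrow> word" where
  "delete_positions w D = nths w ({..<length w} - D)"

end

theory Submission
  imports Defs "HOL-Library.Sublist"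
begin

lemma pal_iff: "palindrome w \<longleftrightarrow> rev w = w"
proof
  assume "palindrome w"
  then have h: "\<forall>i < length w. w ! i = w ! (length w - 1 - i)" unfolding palindrome_def .
  show "rev w = w"
  proof (rule nth_equalityI)
    show "length (rev w) = length w" by simp
    fix i assume "i < length (rev w)"
    then have i: "i < length w" by simp
    then have "rev w ! i = w ! (length w - Suc i)" by (simp add: rev_nth)
    also have "\<dots> = w ! (length w - 1 - i)" by simp
    also have "\<dots> = w ! i" using h i by metis
    finally show "rev w ! i = w ! i" .
  qed
next
  assume h: "rev w = w"
  show "palindrome w" unfolding palindrome_def
  proof (intro allI impI)
    fix i assume "i < length w"
    then have "rev w ! i = w ! (length w - 1 - i)" by (simp add: rev_nth)
    then show "w ! i = w ! (length w - 1 - i)" using h by simp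
  qed
qed

lemma pal_split:
  assumes "rev p = p" "length p \<ge> 2"
  shows "\<exists>x m. p = x # m @ [x] \<and> rev m = m"
proof -
  obtain x r where p: "p = x # r" using assms(2) by (cases p) auto
  have "r \<noteq> []" using assms(2) p by auto
  then obtain m y where r: "r = m @ [y]" by (cases r rule: rev_exhaust) auto
  have "rev p = y # rev m @ [x]" by (simp add: p r)
  then have e: "y # rev m @ [x] = x # m @ [y]" using assms(1) p r by metis
  then have yx: "y = x" and e2: "rev m @ [x] = m @ [y]" using list.inject by blast+
  from e2 have "rev m = m" using append1_eq_conv by blast
  then show ?thesis using p r yx by blast
qed

lemma subseq_snoc_neq:
  assumes "subseq (m @ [x]) (u @ [c])" "x \<noteq> c"
  shows "subseq (m @ [x]) u"
proof -
  obtain xs1 xs2 where e: "m @ [x] = xs1 @ xs2" "subseq xs1 u" "subseq xs2 [c]"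
    using assms(1) by (rule subseq_appendE)
  have l: "length xs2 \<le> 1" using list_emb_length[OF e(3)] by simp
  have "xs2 = []"
  proof (rule ccontr)
    assume "xs2 \<noteq> []"
    with l obtain z where z: "xs2 = [z]" by (cases xs2) auto
    with e(1) have "x = z" by simp
    moreover have "z = c" using e(3) unfolding z subseq_singleton_left by simp
    ultimately show False using assms(2) by simp
  qed
  then show ?thesis using e by simp
qed

lemma main_list:
  assumes "rev p = p" "subseq p (c # u @ [c])"
  shows "\<exists>q. subseq q u \<and> rev (c # q @ [c]) = c # q @ [c] \<and> length p \<le> length q + 2"
proof (cases "length p \<ge> 2")
  case False
  then have "length p \<le> length ([]::'a list) + 2" by simp
  moreover have "rev (c # [] @ [c]) = c # [] @ [c]" by simp
  ultimately show ?thesis by blast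
next
  case True
  then obtain x m where p: "p = x # m @ [x]" "rev m = m" using pal_split assms(1) by blast
  show ?thesis
  proof (cases "x = c")
    case True
    then have "subseq (m @ [c]) (u @ [c])" using assms(2) p(1) by simp
    then have "subseq m u" using subseq_append by blast
    moreover have "rev (c # m @ [c]) = c # m @ [c]" using p(2) by simp
    moreover have "length p \<le> length m + 2" using p(1) by simp
    ultimately show ?thesis by blast
  next
    case False
    have "subseq (x # m @ [x]) (c # (u @ [c]))" using assms(2) p(1) by simp
    then have "subseq ((x # m) @ [x]) (u @ [c])" using subseq_Cons2_neq False by fastforce
    then have "subseq ((x # m) @ [x]) u" by (rule subseq_snoc_neq[OF _ False])
    then have s: "subseq (x # m @ [x]) u" by simp
    have "rev (c # (x # m @ [x]) @ [c]) = c # (x # m @ [x]) @ [c]" using p(2) by simp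
    moreover have "length p \<le> length (x # m @ [x]) + 2" using p(1) by simp
    ultimately show ?thesis using s by blast
  qed
qed

lemma nths_cong:
  assumes "\<forall>i<length xs. i \<in> A \<longleftrightarrow> i \<in> B"
  shows "nths xs A = nths xs B"
  using assms
proof (induction xs arbitrary: A B)
  case Nil
  then show ?case by simp
next
  case (Cons x xs)
  have "\<forall>i<length xs. i \<in> {j. Suc j \<in> A} \<longleftrightarrow> i \<in> {j. Suc j \<in> B}" using Cons.prems by auto
  then have "nths xs {j. Suc j \<in> A} = nths xs {j. Suc j \<in> B}" by (rule Cons.IH)
  moreover have "0 \<in> A \<longleftrightarrow> 0 \<in> B" using Cons.prems by auto
  ultimately show ?case by (simp add: nths_Cons)
qed

theorem lemma2:
  fixes w :: word and k :: nat and D :: "nat set"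
  assumes "w \<noteq> []"
    and "hd w = last w"
    and "D \<subseteq> {..<length w}"
    and "card D = k"
    and "palindrome (delete_positions w D)"
  shows "\<exists>E. E \<subseteq> {..<length w} \<and> card E \<le> k \<and> 0 \<notin> E \<and> length w - 1 \<notin> E
           \<and> palindrome (delete_positions w E)"
proof (cases "length w = 1")
  case True
  have "delete_positions w {} = w" unfolding delete_positions_def by (simp add: nths_all)
  moreover have "palindrome w" using True unfolding palindrome_def by auto
  ultimately show ?thesis by (intro exI[of _ "{}"]) auto
next
  case False
  define n where "n = length w"
  have "n \<noteq> 0" using assms(1) n_def by simp
  then have n2: "n \<ge> 2" using False n_def by arith
  obtain c r where wr: "w = c # r" using assms(1) by (cases w) auto
  have "r \<noteq> []" using n2 wr n_def by auto
  then obtain u y where ru: "r = u @ [y]" by (cases r rule: rev_exhaust) auto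
  have "y = c" using assms(2) wr ru by simp
  hence w: "w = c # u @ [c]" using wr ru by simp
  have n: "n = length u + 2" using w n_def by simp
  define p where "p = delete_positions w D"
  have pr: "rev p = p" using assms(5) p_def pal_iff by simp
  have ps: "subseq p w" unfolding p_def delete_positions_def
    using subseq_conv_nths by blast
  have "length p = card {i. i < n \<and> i \<in> {..<n} - D}" unfolding p_def delete_positions_def n_def
    by (simp add: length_nths)
  also have "{i. i < n \<and> i \<in> {..<n} - D} = {..<n} - D" by auto
  also have "card ({..<n} - D) = n - k" using assms(3,4) n_def by (simp add: card_Diff_subset finite_subset)
  finally have lp: "length p = n - k" .
  obtain q where q: "subseq q u" "rev (c # q @ [c]) = c # q @ [c]" "length p \<le> length q + 2"
    using main_list[OF pr] ps w by blast
  obtain N0 where N0: "q = nths u N0" using q(1) subseq_conv_nths by blast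
  define Nq where "Nq = N0 \<inter> {..<length u}"
  have qNq: "q = nths u Nq" unfolding N0 Nq_def by (rule nths_cong) auto
  have "length q = card {i. i < length u \<and> i \<in> Nq}" unfolding qNq by (simp add: length_nths)
  also have "{i. i < length u \<and> i \<in> Nq} = Nq" unfolding Nq_def by auto
  finally have cNq: "card Nq = length q" by simp
  have fNq: "finite Nq" unfolding Nq_def by simp
  define N where "N = insert 0 (insert (n - 1) (Suc ` Nq))"
  define E where "E = {..<n} - N"
  have Nsub: "N \<subseteq> {..<n}" unfolding N_def Nq_def using n by auto
  have "card (Suc ` Nq) = card Nq" by (simp add: card_image)
  moreover have "0 \<notin> Suc ` Nq" by auto
  moreover have "n - 1 \<notin> Suc ` Nq" unfolding Nq_def using n by auto
  moreover have "0 \<noteq> n - 1" using n by simp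
  ultimately have cN: "card N = length q + 2" unfolding N_def using fNq cNq by simp
  have "{..<n} - E = N" unfolding E_def using Nsub by auto
  then have "delete_positions w E = nths (c # u @ [c]) N" unfolding delete_positions_def n_def w by simp
  also have "\<dots> = c # nths u {j. Suc j \<in> N} @ nths [c] {j. j + length u \<in> {j. Suc j \<in> N}}"
    by (simp add: nths_Cons nths_append N_def)
  also have "nths u {j. Suc j \<in> N} = nths u Nq"
    by (rule nths_cong) (auto simp: N_def n)
  also have "nths [c] {j. j + length u \<in> {j. Suc j \<in> N}} = [c]"
    by (simp add: N_def n)
  finally have "delete_positions w E = c # q @ [c]" using qNq by simp
  have del: "delete_positions w E = c # q @ [c]" by fact
  have "card E = n - card N" unfolding E_def using Nsub by (simp add: card_Diff_subset finite_subset)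
  then have cE: "card E \<le> k" using cN q(3) lp by simp
  have pal: "palindrome (delete_positions w E)" unfolding del using q(2) pal_iff by blast
  have s1: "E \<subseteq> {..<length w}" unfolding E_def n_def by blast
  have s2: "0 \<notin> E" "length w - 1 \<notin> E" unfolding E_def N_def n_def by blast+
  show ?thesis using s1 s2 cE pal by blast
qed

end
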